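(* For all even $n\ge6$ with $\mathbf{s}=\mathbf{n}_{n/2}$, and for all odd $n=2m+1\ge7$ with $\mathbf{s}\in\{\mathbf{n}_m,\mathbf{n}_{m+1},\mathbf{n}_{m,m+1}\}$, $$|\lambda_{n,2,\mathbf{s}}|\le e^{-n}\quad\text{and}\quad|\lambda_{n,4,\mathbf{s}}|\le\tfrac12e^{-n}.$$ Moreover, for all odd $n=2m+1\ge7$, $$|\overline{\lambda}_{n,2,\mathbf{n}_m}|\le e^{-n}\quad\text{and}\quad|\overline{\lambda}_{n,4,\mathbf{n}_m}|\le\tfrac12e^{-n}.$$
   Context: With $(n)_t=n(n-1)\cdots(n-t+1)$, $\lambda_{n,b,s}=\sum_{t=0}^b\binom bt(-2)^t\frac{(s)_t}{(n)_t}$ and, for a vector $\mathbf{s}=(s_1,\dots,s_k)$, $\lambda_{n,b,\mathbf{s}}=\prod_{r=1}^k\lambda_{n,b,s_r}$. Let $\mathbf{n}=(1,2,\dots,n)$; $\mathbf{n}_l$ denotes $\mathbf{n}$ with its $l$-th component deleted, and $\mathbf{n}_{m,m+1}$ denotes $\mathbf{n}$ with components $m$ and $m+1$ deleted. For $n=2m+1$, $\overline{\lambda}_{n,b,\mathbf{n}_m}=\Big(\prod_{s\in\{1,\dots,n\}\setminus\{m,m+1\}}\lambda_{n,b,s}\Big)\cdot\tfrac12(\lambda_{n,b,m}+\lambda_{n,b,m+1})=\tfrac12(\lambda_{n,b,\mathbf{n}_m}+\lambda_{n,b,\mathbf{n}_{m+1}})$. *)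

theory Defs
  imports Complex_Main
begin

definition ffact :: "nat \<Rightarrow> nat \<Rightarrow> real" where
  "ffact n t = (\<Prod>i<t. real n - real i)"

definition lam :: "nat \<Rightarrow> nat \<Rightarrow> nat \<Rightarrow> real" where
  "lam n b s = (\<Sum>t=0..b. real (b choose t) * (-2) ^ t * ffact s t / ffact n t)"

definition lamv :: "nat \<Rightarrow> nat \<Rightarrow> nat list \<Rightarrow> real" where
  "lamv n b ss = (\<Prod>r<length ss. lam n b (ss ! r))"

definition nvec_del :: "nat \<Rightarrow> nat set \<Rightarrow> nat list" where
  "nvec_del n D = filter (\<lambda>i. i \<notin> D) [1..<n+1]"

definition lambar :: "nat \<Rightarrow> nat \<Rightarrow> real" where
  "lambar n b = (let m = (n - 1) div 2 in
     (\<Prod>s\<in>{1..n} - {m, m+1}. lam n b s) * ((lam n b m + lam n b (m+1)) / 2))"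

end

theory Submission imports Defs "HOL-Analysis.Analysis" begin

lemma lam2:
  assumes "n \<ge> 2"
  shows "lam n 2 s = ((real n - 2*real s)^2 - real n) / (real n * (real n - 1))"
proof -
  have n0: "real n \<noteq> 0" "real n - 1 \<noteq> 0" using assms by auto
  show ?thesis
    unfolding lam_def ffact_def
    using n0 by (simp add: eval_nat_numeral lessThan_Suc field_simps)
qed

lemma lam4_aux:
  fixes x y a b c :: real
  assumes ea: "a = x - 1" and eb: "b = x - 2" and ec: "c = x - 3"
    and nz: "x \<noteq> 0" "a \<noteq> 0" "b \<noteq> 0" "c \<noteq> 0"
  shows "1 - 8*y/x + 24*(y*(y-1))/(x*a) - 32*(y*(y-1)*(y-2))/(x*a*b)
          + 16*(y*(y-1)*(y-2)*(y-3))/(x*a*b*c)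
        = (((x - 2*y)^2)^2 - (6*x - 8)*(x - 2*y)^2 + 3*x*(x - 2)) / (x * a * b * c)"
  using nz apply (simp add: field_simps)
  unfolding ea eb ec by algebra

lemma lam4:
  assumes "n \<ge> 4"
  shows "lam n 4 s = (((real n - 2*real s)^2)^2 - (6*real n - 8)*(real n - 2*real s)^2 + 3*real n*(real n - 2))
     / (real n * (real n - 1) * (real n - 2) * (real n - 3))"
proof -
  define x where "x = real n"
  define y where "y = real s"
  have n0: "x \<noteq> 0" "x - 1 \<noteq> 0" "x - 2 \<noteq> 0" "x - 3 \<noteq> 0" using assms unfolding x_def by auto
  have "lam n 4 s = 1 - 8*y/x + 24*(y*(y-1))/(x*(x-1)) - 32*(y*(y-1)*(y-2))/(x*(x-1)*(x-2))
          + 16*(y*(y-1)*(y-2)*(y-3))/(x*(x-1)*(x-2)*(x-3))"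
    unfolding lam_def ffact_def x_def y_def
    by (simp add: eval_nat_numeral lessThan_Suc algebra_simps flip: add_divide_distrib)
  also have "\<dots> = (((x - 2*y)^2)^2 - (6*x - 8)*(x - 2*y)^2 + 3*x*(x - 2)) / (x * (x - 1) * (x - 2) * (x - 3))"
    by (rule lam4_aux) (use n0 in auto)
  finally show ?thesis unfolding x_def y_def .
qed

lemma lam_sym:
  assumes "n \<ge> 4" "s \<le> n" "b = 2 \<or> b = 4"
  shows "lam n b (n - s) = lam n b s"
proof -
  have e: "(real n - 2 * real (n - s))^2 = (real n - 2 * real s)^2"
    using assms(2) by (simp add: of_nat_diff power2_eq_square algebra_simps)
  show ?thesis using assms(3)
  proof
    assume "b = 2" then show ?thesis using assms(1) by (simp add: lam2 e)
  next
    assume "b = 4" then show ?thesis using assms(1) by (simp only: lam4 e)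
  qed
qed

lemma lam_top:
  assumes "n \<ge> 4" "b = 2 \<or> b = 4"
  shows "lam n b n = 1"
  using assms(2)
proof
  assume "b = 2" then show ?thesis using assms(1)
    by (simp add: lam2 field_simps power2_eq_square algebra_simps)
next
  assume b: "b = 4"
  define x where "x = real n"
  have n0: "x \<noteq> 0" "x - 1 \<noteq> 0" "x - 2 \<noteq> 0" "x - 3 \<noteq> 0" using assms unfolding x_def by auto
  have "lam n b n = (((x - 2*x)^2)^2 - (6*x - 8)*(x - 2*x)^2 + 3*x*(x - 2))
     / (x * (x - 1) * (x - 2) * (x - 3))" unfolding x_def b using assms(1) by (rule lam4)
  also have "\<dots> = 1"
  proof -
    have "((x - 2*x)^2)^2 - (6*x - 8)*(x - 2*x)^2 + 3*x*(x - 2) = x * (x - 1) * (x - 2) * (x - 3)"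
      by algebra
    then show ?thesis using n0 by simp
  qed
  finally show ?thesis .
qed

lemma lamv_set: "lamv n b (nvec_del n E) = (\<Prod>s\<in>{1..n}-E. lam n b s)"
proof -
  let ?xs = "nvec_del n E"
  have d: "distinct ?xs" by (simp add: nvec_del_def)
  have st: "set ?xs = {1..n} - E" by (auto simp: nvec_del_def)
  have "lamv n b ?xs = (\<Prod>s\<in>(!) ?xs ` {..<length ?xs}. lam n b s)"
    unfolding lamv_def
    by (subst prod.reindex) (use d in \<open>auto intro: inj_on_nth\<close>)
  also have "(!) ?xs ` {..<length ?xs} = set ?xs"
    by (auto simp: set_conv_nth)
  finally show ?thesis using st by simp
qed

lemma prod_split:
  fixes f :: "nat \<Rightarrow> real"
  assumes "2*K < n"
  shows "(\<Prod>s\<in>{1..K} \<union> {n-K..n-1} \<union> {n}. f s) = (\<Prod>s\<in>{1..K}. f s) * (\<Prod>s\<in>{1..K}. f (n-s)) * f n"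
proof -
  have "(\<Prod>s\<in>{n-K..n-1}. f s) = (\<Prod>s\<in>{1..K}. f (n-s))"
    by (rule prod.reindex_bij_witness[where i="\<lambda>s. n - s" and j="\<lambda>s. n - s"]) (use assms in auto)
  moreover have "(\<Prod>s\<in>{1..K} \<union> {n-K..n-1} \<union> {n}. f s) =
      (\<Prod>s\<in>{1..K}. f s) * (\<Prod>s\<in>{n-K..n-1}. f s) * f n"
  proof -
    have "(\<Prod>s\<in>{1..K} \<union> {n-K..n-1} \<union> {n}. f s) = (\<Prod>s\<in>{1..K} \<union> {n-K..n-1}. f s) * f n"
      using assms by (subst prod.union_disjoint) auto
    also have "(\<Prod>s\<in>{1..K} \<union> {n-K..n-1}. f s) = (\<Prod>s\<in>{1..K}. f s) * (\<Prod>s\<in>{n-K..n-1}. f s)"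
      using assms by (subst prod.union_disjoint) auto
    finally show ?thesis .
  qed
  ultimately show ?thesis by simp
qed

lemma lamv_sq:
  assumes "n \<ge> 4" "b = 2 \<or> b = 4" "2*K < n" "{1..n} - E = {1..K} \<union> {n-K..n-1} \<union> {n}"
  shows "\<bar>lamv n b (nvec_del n E)\<bar> = (\<Prod>s\<in>{1..K}. \<bar>lam n b s\<bar>)^2"
proof -
  have "lamv n b (nvec_del n E) = (\<Prod>s\<in>{1..K}. lam n b s) * (\<Prod>s\<in>{1..K}. lam n b (n-s)) * lam n b n"
    unfolding lamv_set assms(4) by (rule prod_split) (rule assms(3))
  also have "(\<Prod>s\<in>{1..K}. lam n b (n-s)) = (\<Prod>s\<in>{1..K}. lam n b s)"
    by (rule prod.cong) (use assms in \<open>auto intro: lam_sym\<close>)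
  finally have "lamv n b (nvec_del n E) = (\<Prod>s\<in>{1..K}. lam n b s)^2"
    using lam_top[OF assms(1,2)] by (simp add: power2_eq_square)
  then show ?thesis by (simp add: abs_prod power_abs)
qed

lemma amgm:
  fixes a :: "'a \<Rightarrow> real"
  assumes "finite A" "\<And>x. x \<in> A \<Longrightarrow> 0 \<le> a x" "0 < mu" "sum a A \<le> real (card A) * mu"
  shows "prod a A \<le> mu ^ card A"
proof -
  have "prod a A \<le> (\<Prod>x\<in>A. mu * exp (a x / mu - 1))"
  proof (rule prod_mono)
    fix x assume x: "x \<in> A"
    have "a x / mu \<le> exp (a x / mu - 1)"
      using exp_ge_add_one_self[of "a x / mu - 1"] by simp
    then have "a x \<le> mu * exp (a x / mu - 1)"
      using assms(3) by (simp add: divide_le_eq mult.commute)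
    then show "0 \<le> a x \<and> a x \<le> mu * exp (a x / mu - 1)" using assms(2)[OF x] by simp
  qed
  also have "\<dots> = mu ^ card A * exp (\<Sum>x\<in>A. a x / mu - 1)"
    by (simp add: prod.distrib exp_sum assms(1))
  also have "(\<Sum>x\<in>A. a x / mu - 1) = sum a A / mu - real (card A)"
    by (simp add: sum_subtractf sum_divide_distrib)
  also have "exp (sum a A / mu - real (card A)) \<le> 1"
    using assms(3,4) by (simp add: divide_le_eq mult.commute)
  finally show ?thesis using assms(3) by (simp add: mult_left_le)
qed

lemma pow_exp_bound:
  assumes "K \<ge> 1" "al \<ge> 0"
  shows "(1 + al / real K) ^ K \<le> exp al"
proof -
  have "(1 + al / real K) ^ K \<le> exp (al / real K) ^ K"
    by (rule power_mono) (use assms in \<open>auto simp: exp_ge_add_one_self add_nonneg_nonneg\<close>)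
  also have "\<dots> = exp al" using assms by (simp add: exp_of_nat_mult[symmetric])
  finally show ?thesis .
qed

lemma exp_m1: "25/68 \<le> exp (-1::real)"
proof -
  have "exp 1 < (272/100::real)" by (rule e_less_272)
  then have "1 / (272/100) \<le> 1 / exp (1::real)"
    by (intro divide_left_mono) auto
  then show ?thesis by (simp add: exp_minus inverse_eq_divide)
qed

lemma exp_m3: "1/21 \<le> exp (-3::real)"
proof -
  have "(25/68)^3 \<le> exp (-1::real) ^ 3" by (rule power_mono[OF exp_m1]) auto
  also have "\<dots> = exp (-3)" by (simp add: exp_of_nat_mult[symmetric])
  finally have "(25/68)^3 \<le> exp (-3::real)" .
  moreover have "(1/21::real) \<le> (25/68)^3" by (simp add: power_divide)
  ultimately show ?thesis by linarith
qed

lemma gen_bound: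
  fixes g :: "nat \<Rightarrow> real"
  assumes K: "K \<ge> 1" and g0: "\<And>s. 0 \<le> g s" and c: "0 < c" and al: "al \<ge> 0"
    and S: "(\<Sum>s=1..K. g s) \<le> c * (real K + al)"
  shows "(\<Prod>s=1..K. g s) \<le> c ^ K * exp al"
proof -
  have "(\<Prod>s=1..K. g s) \<le> (c * (real K + al) / real K) ^ card {1..K}"
    by (rule amgm) (use K g0 c al S in auto)
  also have "c * (real K + al) / real K = c * (1 + al / real K)"
    using K by (simp add: field_simps)
  also have "(c * (1 + al / real K)) ^ card {1..K} = c ^ K * (1 + al / real K) ^ K"
    by (simp add: power_mult_distrib)
  also have "\<dots> \<le> c ^ K * exp al"
    by (rule mult_left_mono[OF pow_exp_bound]) (use K al c in auto)
  finally show ?thesis .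
qed

lemma pair_sq:
  fixes g :: "nat \<Rightarrow> real"
  shows "(\<Prod>s=1..K. g s)^2 = (\<Prod>s=1..K. g s * g (K + 1 - s))"
proof -
  have "(\<Prod>s=1..K. g s) = (\<Prod>s=1..K. g (K + 1 - s))"
    by (subst prod.atLeastAtMost_rev) simp
  then have "(\<Prod>s=1..K. g s)^2 = (\<Prod>s=1..K. g s) * (\<Prod>s=1..K. g (K + 1 - s))"
    by (simp add: power2_eq_square)
  then show ?thesis by (simp add: prod.distrib)
qed

lemma lam2_bound:
  assumes "n \<ge> 2"
  shows "\<bar>lam n 2 t\<bar> \<le> ((real n - 2*real t)^2 + real n) / (real n * (real n - 1))"
proof -
  have D: "real n * (real n - 1) > 0" using assms by simp
  have "0 \<le> (real n - 2*real t)^2" by simp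
  then have "\<bar>(real n - 2*real t)^2 - real n\<bar> \<le> (real n - 2*real t)^2 + real n" by (simp add: abs_if)
  note A = this
  show ?thesis unfolding lam2[OF assms]
    apply (subst abs_div_pos[OF D, symmetric])
    apply (rule divide_right_mono[OF A])
    using D by linarith
qed

lemma half_nonneg: "2*A = B + C \<Longrightarrow> 0 \<le> B \<Longrightarrow> 0 \<le> C \<Longrightarrow> 0 \<le> (A::real)" by linarith

lemma lam4_bound:
  assumes "n \<ge> 4"
  shows "\<bar>lam n 4 t\<bar> \<le> (((real n - 2*real t)^2)^2 + 8*(real n - 2*real t)^2 + 3*real n*(real n - 2))
     / (real n * (real n - 1) * (real n - 2) * (real n - 3))"
proof -
  have D: "real n * (real n - 1) * (real n - 2) * (real n - 3) > 0" using assms by simp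
  define y where "y = (real n - 2*real t)^2"
  have y0: "y \<ge> 0" unfolding y_def by simp
  have n4: "real n \<ge> 4" using assms by simp
  have "\<bar>y^2 - (6*real n - 8)*y + 3*real n*(real n - 2)\<bar> \<le> y^2 + 8*y + 3*real n*(real n - 2)"
  proof (rule abs_leI)
    show "y^2 - (6*real n - 8)*y + 3*real n*(real n - 2) \<le> y^2 + 8*y + 3*real n*(real n - 2)"
      using y0 n4 by (simp add: algebra_simps)
    show "- (y^2 - (6*real n - 8)*y + 3*real n*(real n - 2)) \<le> y^2 + 8*y + 3*real n*(real n - 2)"
    proof -
      have e: "2*(2*y^2 - (6*real n - 16)*y + 6*real n*(real n - 2)) = (2*y - 3*real n + 8)^2 + (3*(real n)^2 + 24*real n - 64)"
        by (simp add: power2_eq_square algebra_simps)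
      have "real n * real n \<ge> 4 * real n" using n4 by (intro mult_right_mono) auto
      then have C: "3*(real n)^2 + 24*real n - 64 \<ge> 0" using n4 unfolding power2_eq_square by linarith
      have "2*y^2 - (6*real n - 16)*y + 6*real n*(real n - 2) \<ge> 0"
        by (rule half_nonneg[OF e _ C]) simp
      then show ?thesis by (simp add: algebra_simps)
    qed
  qed
  note A = this
  show ?thesis unfolding lam4[OF assms] y_def[symmetric]
    apply (subst abs_div_pos[OF D, symmetric])
    apply (rule divide_right_mono[OF A])
    using D by linarith
qed

lemma gen2:
  assumes n: "n \<ge> 4" and K: "K \<ge> 1" and c: "c > 0" and al: "al \<ge> 0"
    and S: "(\<Sum>s=1..K. ((real n - 2*real s)^2 + real n) * ((real n - 2*real (K + 1 - s))^2 + real n))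
             \<le> c * (real K + al) * (real n * (real n - 1))^2"
  shows "(\<Prod>s=1..K. \<bar>lam n 2 s\<bar>)^2 \<le> c ^ K * exp al"
proof -
  define D where "D = real n * (real n - 1)"
  have D0: "D > 0" unfolding D_def using n by simp
  have "(\<Prod>s=1..K. \<bar>lam n 2 s\<bar>)^2 = (\<Prod>s=1..K. \<bar>lam n 2 s\<bar> * \<bar>lam n 2 (K + 1 - s)\<bar>)"
    by (rule pair_sq)
  also have "\<dots> \<le> c ^ K * exp al"
  proof (rule gen_bound[OF K _ c al])
    show "0 \<le> \<bar>lam n 2 s\<bar> * \<bar>lam n 2 (K + 1 - s)\<bar>" for s by simp
    have "(\<Sum>s=1..K. \<bar>lam n 2 s\<bar> * \<bar>lam n 2 (K + 1 - s)\<bar>) \<le>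
        (\<Sum>s=1..K. ((real n - 2*real s)^2 + real n) / (real n * (real n - 1)) * (((real n - 2*real (K + 1 - s))^2 + real n) / (real n * (real n - 1))))"
      by (rule sum_mono, rule mult_mono[OF lam2_bound lam2_bound]) (use n in auto)
    also have "\<dots> = (\<Sum>s=1..K. ((real n - 2*real s)^2 + real n) / D * (((real n - 2*real (K + 1 - s))^2 + real n) / D))"
      unfolding D_def ..
    also have "\<dots> = (\<Sum>s=1..K. ((real n - 2*real s)^2 + real n) * ((real n - 2*real (K + 1 - s))^2 + real n)) / D^2"
      by (simp add: sum_divide_distrib power2_eq_square)
    also have "\<dots> \<le> c * (real K + al)"
    proof -
      have D2: "D^2 > 0" using D0 by simp
      show ?thesis apply (subst pos_divide_le_eq[OF D2]) unfolding D_def by (rule S)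
    qed
    finally show "(\<Sum>s=1..K. \<bar>lam n 2 s\<bar> * \<bar>lam n 2 (K + 1 - s)\<bar>) \<le> c * (real K + al)" .
  qed
  finally show ?thesis .
qed

lemma gen4:
  assumes n: "n \<ge> 4" and K: "K \<ge> 1" and c: "c > 0" and al: "al \<ge> 0"
    and S: "(\<Sum>s=1..K. ((real n - 2*real s)^2)^2 + 8*(real n - 2*real s)^2 + 3*real n*(real n - 2))
             \<le> c * (real K + al) * (real n * (real n - 1) * (real n - 2) * (real n - 3))"
  shows "(\<Prod>s=1..K. \<bar>lam n 4 s\<bar>) \<le> c ^ K * exp al"
proof (rule gen_bound[OF K _ c al])
  define D where "D = real n * (real n - 1) * (real n - 2) * (real n - 3)"
  have D0: "D > 0" unfolding D_def using n by simp
  show "0 \<le> \<bar>lam n 4 s\<bar>" for s by simp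
  have "(\<Sum>s=1..K. \<bar>lam n 4 s\<bar>) \<le>
      (\<Sum>s=1..K. (((real n - 2*real s)^2)^2 + 8*(real n - 2*real s)^2 + 3*real n*(real n - 2)) / (real n * (real n - 1) * (real n - 2) * (real n - 3)))"
    by (rule sum_mono, rule lam4_bound) (use n in auto)
  also have "\<dots> = (\<Sum>s=1..K. (((real n - 2*real s)^2)^2 + 8*(real n - 2*real s)^2 + 3*real n*(real n - 2)) / D)"
    unfolding D_def ..
  also have "\<dots> = (\<Sum>s=1..K. ((real n - 2*real s)^2)^2 + 8*(real n - 2*real s)^2 + 3*real n*(real n - 2)) / D"
    by (simp add: sum_divide_distrib)
  also have "\<dots> \<le> c * (real K + al)"
    apply (subst pos_divide_le_eq[OF D0]) unfolding D_def by (rule S)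
  finally show "(\<Sum>s=1..K. \<bar>lam n 4 s\<bar>) \<le> c * (real K + al)" .
qed

lemma sum_Suc1: "(\<Sum>s=1..Suc K. f s) = (\<Sum>s=1..K. f s) + (f (Suc K) :: real)" by simp

lemma cf_e2: "15 * (\<Sum>s=1..K. ((x - 2*real s)^2 + x) * ((2*real s)^2 + x)) = (-8)*real K + (20)*real K*x + (-5)*real K*x^2 + (15)*real K*x^3 + (80)*real K^3 + (-80)*real K^3*x + (20)*real K^3*x^2 + (120)*real K^4 + (-60)*real K^4*x + (48)*real K^5"
proof (induction K)
  case 0 then show ?case by simp
next
  case (Suc K)
  show ?case apply (subst sum_Suc1) apply (subst distrib_left) apply (subst Suc.IH) unfolding of_nat_Suc by algebra
qed

lemma cf_o2: "15 * (\<Sum>s=1..K. ((x - 2*real s)^2 + x) * ((2*real s + 1)^2 + x)) = (2)*real K + (-5)*real K*x + (40)*real K*x^2 + (15)*real K*x^3 + (90)*real K^2 + (-120)*real K^2*x + (30)*real K^2*x^2 + (220)*real K^3 + (-160)*real K^3*x + (20)*real K^3*x^2 + (180)*real K^4 + (-60)*real K^4*x + (48)*real K^5"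
proof (induction K)
  case 0 then show ?case by simp
next
  case (Suc K)
  show ?case apply (subst sum_Suc1) apply (subst distrib_left) apply (subst Suc.IH) unfolding of_nat_Suc by algebra
qed

lemma cf_4: "15 * (\<Sum>s=1..K. ((x - 2*real s)^2)^2 + 8*(x - 2*real s)^2 + 3*x*(x - 2)) = (72)*real K + (-330)*real K*x + (225)*real K*x^2 + (-60)*real K*x^3 + (15)*real K*x^4 + (240)*real K^2 + (-360)*real K^2*x + (180)*real K^2*x^2 + (-60)*real K^2*x^3 + (240)*real K^3 + (-240)*real K^3*x + (120)*real K^3*x^2 + (120)*real K^4 + (-120)*real K^4*x + (48)*real K^5"
proof (induction K)
  case 0 then show ?case by simp
next
  case (Suc K)
  show ?case apply (subst sum_Suc1) apply (subst distrib_left) apply (subst Suc.IH) unfolding of_nat_Suc by algebra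
qed

lemma poly_e2:
  fixes q :: real assumes "q \<ge> 10"
  shows "((-8)*(q - 1) + (20)*(q - 1)*(2*q) + (-5)*(q - 1)*(2*q)^2 + (15)*(q - 1)*(2*q)^3 + (80)*(q - 1)^3 + (-80)*(q - 1)^3*(2*q) + (20)*(q - 1)^3*(2*q)^2 + (120)*(q - 1)^4 + (-60)*(q - 1)^4*(2*q) + (48)*(q - 1)^5) / 15 \<le> 1/21 * (q - 1 + 6) * ((2*q) * (2*q - 1))^2"
proof -
  define t where "t = q - 10"
  have t: "t \<ge> 0" and q: "q = t + 10" using assms unfolding t_def by auto
  have "1/21 * (q - 1 + 6) * ((2*q) * (2*q - 1))^2 - ((-8)*(q - 1) + (20)*(q - 1)*(2*q) + (-5)*(q - 1)*(2*q)^2 + (15)*(q - 1)*(2*q)^3 + (80)*(q - 1)^3 + (-80)*(q - 1)^3*(2*q) + (20)*(q - 1)^3*(2*q)^2 + (120)*(q - 1)^4 + (-60)*(q - 1)^4*(2*q) + (48)*(q - 1)^5) / 15 = (193680 + 770568 * t^1 + 292320 * t^2 + 43320 * t^3 + 2880 * t^4 + 72 * t^5) / 315"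
    unfolding q by algebra
  moreover have "0 \<le> (193680 + 770568 * t^1 + 292320 * t^2 + 43320 * t^3 + 2880 * t^4 + 72 * t^5) / 315"
    using t by (intro divide_nonneg_nonneg add_nonneg_nonneg mult_nonneg_nonneg zero_le_power) auto
  ultimately show ?thesis by linarith
qed

lemma poly_o2:
  fixes q :: real assumes "q \<ge> 12"
  shows "((2)*(q - 1) + (-5)*(q - 1)*(2*q + 1) + (40)*(q - 1)*(2*q + 1)^2 + (15)*(q - 1)*(2*q + 1)^3 + (90)*(q - 1)^2 + (-120)*(q - 1)^2*(2*q + 1) + (30)*(q - 1)^2*(2*q + 1)^2 + (220)*(q - 1)^3 + (-160)*(q - 1)^3*(2*q + 1) + (20)*(q - 1)^3*(2*q + 1)^2 + (180)*(q - 1)^4 + (-60)*(q - 1)^4*(2*q + 1) + (48)*(q - 1)^5) / 15 \<le> 1/21 * (q - 1 + 8) * ((2*q + 1) * (2*q + 1 - 1))^2"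
proof -
  define t where "t = q - 12"
  have t: "t \<ge> 0" and q: "q = t + 12" using assms unfolding t_def by auto
  have "1/21 * (q - 1 + 8) * ((2*q + 1) * (2*q + 1 - 1))^2 - ((2)*(q - 1) + (-5)*(q - 1)*(2*q + 1) + (40)*(q - 1)*(2*q + 1)^2 + (15)*(q - 1)*(2*q + 1)^3 + (90)*(q - 1)^2 + (-120)*(q - 1)^2*(2*q + 1) + (30)*(q - 1)^2*(2*q + 1)^2 + (220)*(q - 1)^3 + (-160)*(q - 1)^3*(2*q + 1) + (20)*(q - 1)^3*(2*q + 1)^2 + (180)*(q - 1)^4 + (-60)*(q - 1)^4*(2*q + 1) + (48)*(q - 1)^5) / 15 = (2239740 + 2480748 * t^1 + 654000 * t^2 + 72840 * t^3 + 3720 * t^4 + 72 * t^5) / 315"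
    unfolding q by algebra
  moreover have "0 \<le> (2239740 + 2480748 * t^1 + 654000 * t^2 + 72840 * t^3 + 3720 * t^4 + 72 * t^5) / 315"
    using t by (intro divide_nonneg_nonneg add_nonneg_nonneg mult_nonneg_nonneg zero_le_power) auto
  ultimately show ?thesis by linarith
qed

lemma poly_e4:
  fixes q :: real assumes "q \<ge> 8"
  shows "((72)*(q - 1) + (-330)*(q - 1)*(2*q) + (225)*(q - 1)*(2*q)^2 + (-60)*(q - 1)*(2*q)^3 + (15)*(q - 1)*(2*q)^4 + (240)*(q - 1)^2 + (-360)*(q - 1)^2*(2*q) + (180)*(q - 1)^2*(2*q)^2 + (-60)*(q - 1)^2*(2*q)^3 + (240)*(q - 1)^3 + (-240)*(q - 1)^3*(2*q) + (120)*(q - 1)^3*(2*q)^2 + (120)*(q - 1)^4 + (-120)*(q - 1)^4*(2*q) + (48)*(q - 1)^5) / 15 \<le> 11/50 * (q - 1 + 2) * ((2*q) * (2*q - 1) * (2*q - 2) * (2*q - 3))"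
proof -
  define t where "t = q - 8"
  have t: "t \<ge> 0" and q: "q = t + 8" using assms unfolding t_def by auto
  have "11/50 * (q - 1 + 2) * ((2*q) * (2*q - 1) * (2*q - 2) * (2*q - 3)) - ((72)*(q - 1) + (-330)*(q - 1)*(2*q) + (225)*(q - 1)*(2*q)^2 + (-60)*(q - 1)*(2*q)^3 + (15)*(q - 1)*(2*q)^4 + (240)*(q - 1)^2 + (-360)*(q - 1)^2*(2*q) + (180)*(q - 1)^2*(2*q)^2 + (-60)*(q - 1)^2*(2*q)^3 + (240)*(q - 1)^3 + (-240)*(q - 1)^3*(2*q) + (120)*(q - 1)^3*(2*q)^2 + (120)*(q - 1)^4 + (-120)*(q - 1)^4*(2*q) + (48)*(q - 1)^5) / 15 = (1864800 + 2780940 * t^1 + 1020720 * t^2 + 154980 * t^3 + 10320 * t^4 + 240 * t^5) / 750"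
    unfolding q by algebra
  moreover have "0 \<le> (1864800 + 2780940 * t^1 + 1020720 * t^2 + 154980 * t^3 + 10320 * t^4 + 240 * t^5) / 750"
    using t by (intro divide_nonneg_nonneg add_nonneg_nonneg mult_nonneg_nonneg zero_le_power) auto
  ultimately show ?thesis by linarith
qed

lemma poly_o4:
  fixes q :: real assumes "q \<ge> 9"
  shows "((72)*(q - 1) + (-330)*(q - 1)*(2*q + 1) + (225)*(q - 1)*(2*q + 1)^2 + (-60)*(q - 1)*(2*q + 1)^3 + (15)*(q - 1)*(2*q + 1)^4 + (240)*(q - 1)^2 + (-360)*(q - 1)^2*(2*q + 1) + (180)*(q - 1)^2*(2*q + 1)^2 + (-60)*(q - 1)^2*(2*q + 1)^3 + (240)*(q - 1)^3 + (-240)*(q - 1)^3*(2*q + 1) + (120)*(q - 1)^3*(2*q + 1)^2 + (120)*(q - 1)^4 + (-120)*(q - 1)^4*(2*q + 1) + (48)*(q - 1)^5) / 15 \<le> 11/50 * (q - 1 + 2) * ((2*q + 1) * (2*q + 1 - 1) * (2*q + 1 - 2) * (2*q + 1 - 3))"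
proof -
  define t where "t = q - 9"
  have t: "t \<ge> 0" and q: "q = t + 9" using assms unfolding t_def by auto
  have "11/50 * (q - 1 + 2) * ((2*q + 1) * (2*q + 1 - 1) * (2*q + 1 - 2) * (2*q + 1 - 3)) - ((72)*(q - 1) + (-330)*(q - 1)*(2*q + 1) + (225)*(q - 1)*(2*q + 1)^2 + (-60)*(q - 1)*(2*q + 1)^3 + (15)*(q - 1)*(2*q + 1)^4 + (240)*(q - 1)^2 + (-360)*(q - 1)^2*(2*q + 1) + (180)*(q - 1)^2*(2*q + 1)^2 + (-60)*(q - 1)^2*(2*q + 1)^3 + (240)*(q - 1)^3 + (-240)*(q - 1)^3*(2*q + 1) + (120)*(q - 1)^3*(2*q + 1)^2 + (120)*(q - 1)^4 + (-120)*(q - 1)^4*(2*q + 1) + (48)*(q - 1)^5) / 15 = (1605600 + 3592860 * t^1 + 1264500 * t^2 + 176100 * t^3 + 10800 * t^4 + 240 * t^5) / 750"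
    unfolding q by algebra
  moreover have "0 \<le> (1605600 + 3592860 * t^1 + 1264500 * t^2 + 176100 * t^3 + 10800 * t^4 + 240 * t^5) / 750"
    using t by (intro divide_nonneg_nonneg add_nonneg_nonneg mult_nonneg_nonneg zero_le_power) auto
  ultimately show ?thesis by linarith
qed

lemma exp_m3': "(25/68)^3 \<le> exp (-3::real)"
proof -
  have "(25/68)^3 \<le> exp (-1::real) ^ 3" by (rule power_mono[OF exp_m1]) auto
  also have "\<dots> = exp (-3)" by (simp add: exp_of_nat_mult[symmetric])
  finally show ?thesis .
qed

lemma div15: "15 * (a::real) = b \<Longrightarrow> a = b / 15" by auto

lemma exp_fin:
  fixes c :: real and K :: nat
  assumes "0 \<le> c" "c \<le> exp (-3)"
  shows "c ^ K * exp al \<le> exp (al - 3 * real K)"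
proof -
  have "c ^ K \<le> exp (-3) ^ K" by (rule power_mono) (use assms in auto)
  also have "\<dots> = exp (- 3 * real K)" by (simp add: exp_of_nat_mult[symmetric])
  finally have "c ^ K * exp al \<le> exp (- 3 * real K) * exp al" by (rule mult_right_mono) simp
  also have "\<dots> = exp (al - 3 * real K)" by (simp add: exp_add[symmetric])
  finally show ?thesis .
qed

lemma core_e2:
  assumes p: "p \<ge> 10"
  shows "(\<Prod>s=1..p-1. \<bar>lam (2*p) 2 s\<bar>)^2 \<le> exp (- real (2*p))"
proof -
  have rK: "real (p - 1) = real p - 1" and rn: "real (2*p) = 2 * real p" using p by auto
  have pp: "real p \<ge> 10" using p by simp
  have "(\<Sum>s=1..p-1. ((real (2*p) - 2*real s)^2 + real (2*p)) * ((real (2*p) - 2*real (p - 1 + 1 - s))^2 + real (2*p)))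
      = (\<Sum>s=1..p-1. ((real (2*p) - 2*real s)^2 + real (2*p)) * ((2*real s)^2 + real (2*p)))"
    by (rule sum.cong) (auto simp: of_nat_diff)
  also have "\<dots> \<le> 1/21 * (real (p - 1) + 6) * (real (2*p) * (real (2*p) - 1))^2"
    unfolding rK rn div15[OF cf_e2[of "real (2*p)" "p - 1", unfolded rK rn]] by (rule poly_e2[OF pp])
  finally have "(\<Prod>s=1..p-1. \<bar>lam (2*p) 2 s\<bar>)^2 \<le> (1/21) ^ (p - 1) * exp 6"
    by (intro gen2) (use p in auto)
  also have "\<dots> \<le> exp (6 - 3 * real (p - 1))"
    by (rule exp_fin) (use exp_m3 in auto)
  also have "\<dots> \<le> exp (- real (2*p))" using p by (simp add: rK)
  finally show ?thesis .
qed

lemma core_o2: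
  assumes m: "m \<ge> 12"
  shows "(\<Prod>s=1..m-1. \<bar>lam (2*m+1) 2 s\<bar>)^2 \<le> exp (- real (2*m+1))"
proof -
  have rK: "real (m - 1) = real m - 1" and rn: "real (2*m+1) = 2 * real m + 1" using m by auto
  have pp: "real m \<ge> 12" using m by simp
  have "(\<Sum>s=1..m-1. ((real (2*m+1) - 2*real s)^2 + real (2*m+1)) * ((real (2*m+1) - 2*real (m - 1 + 1 - s))^2 + real (2*m+1)))
      = (\<Sum>s=1..m-1. ((real (2*m+1) - 2*real s)^2 + real (2*m+1)) * ((2*real s + 1)^2 + real (2*m+1)))"
    by (rule sum.cong) (auto simp: of_nat_diff)
  also have "\<dots> \<le> 1/21 * (real (m - 1) + 8) * (real (2*m+1) * (real (2*m+1) - 1))^2"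
    unfolding rK rn div15[OF cf_o2[of "real (2*m+1)" "m - 1", unfolded rK rn]] by (rule poly_o2[OF pp])
  finally have "(\<Prod>s=1..m-1. \<bar>lam (2*m+1) 2 s\<bar>)^2 \<le> (1/21) ^ (m - 1) * exp 8"
    by (intro gen2) (use m in auto)
  also have "\<dots> \<le> exp (8 - 3 * real (m - 1))"
    by (rule exp_fin) (use exp_m3 in auto)
  also have "\<dots> \<le> exp (- real (2*m+1))" using m by (simp add: rK)
  finally show ?thesis .
qed

lemma fin4:
  assumes "(P::real) \<le> (11/50) ^ K * exp 2" "0 \<le> P" "5 - 3 * real K \<le> - real n"
  shows "P^2 \<le> exp (- real n) / 2"
proof -
  have "P^2 \<le> ((11/50) ^ K * exp 2)^2" by (rule power_mono) (use assms in auto)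
  also have "\<dots> = (121/2500) ^ K * exp 4"
  proof -
    have a: "((11/50::real)^K)^2 = ((11/50)^2)^K" by (metis power_mult mult.commute)
    have b: "(11/50::real)^2 = 121/2500" by (simp add: power2_eq_square)
    have c: "(exp (2::real))^2 = exp 4" by (simp add: power2_eq_square exp_add[symmetric])
    show ?thesis by (simp only: power_mult_distrib a b c)
  qed
  also have "\<dots> \<le> exp (4 - 3 * real K)"
  proof (rule exp_fin)
    have "(121/2500::real) \<le> (25/68)^3" by (simp add: power_divide)
    then show "121/2500 \<le> exp (-3::real)" using exp_m3' by linarith
  qed simp
  also have "\<dots> = exp (5 - 3 * real K) / exp 1" by (simp add: exp_diff[symmetric])
  also have "\<dots> \<le> exp (- real n) / 2"
  proof (rule frac_le)
    show "exp (5 - 3 * real K) \<le> exp (- real n)" using assms(3) by simp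
    show "2 \<le> exp (1::real)" using exp_ge_add_one_self[of 1] by simp
  qed auto
  finally show ?thesis .
qed

lemma core_e4:
  assumes p: "p \<ge> 8"
  shows "(\<Prod>s=1..p-1. \<bar>lam (2*p) 4 s\<bar>)^2 \<le> exp (- real (2*p)) / 2"
proof -
  have rK: "real (p - 1) = real p - 1" and rn: "real (2*p) = 2 * real p" using p by auto
  have pp: "real p \<ge> 8" using p by simp
  have "(\<Sum>s=1..p-1. ((real (2*p) - 2*real s)^2)^2 + 8*(real (2*p) - 2*real s)^2 + 3*real (2*p)*(real (2*p) - 2))
      \<le> 11/50 * (real (p - 1) + 2) * (real (2*p) * (real (2*p) - 1) * (real (2*p) - 2) * (real (2*p) - 3))"
    unfolding rK rn div15[OF cf_4[of "real (2*p)" "p - 1", unfolded rK rn]] by (rule poly_e4[OF pp])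
  then have "(\<Prod>s=1..p-1. \<bar>lam (2*p) 4 s\<bar>) \<le> (11/50) ^ (p - 1) * exp 2"
    by (intro gen4) (use p in auto)
  then show ?thesis by (rule fin4) (use p rK in \<open>auto intro: prod_nonneg\<close>)
qed

lemma core_o4:
  assumes m: "m \<ge> 9"
  shows "(\<Prod>s=1..m-1. \<bar>lam (2*m+1) 4 s\<bar>)^2 \<le> exp (- real (2*m+1)) / 2"
proof -
  have rK: "real (m - 1) = real m - 1" and rn: "real (2*m+1) = 2 * real m + 1" using m by auto
  have pp: "real m \<ge> 9" using m by simp
  have "(\<Sum>s=1..m-1. ((real (2*m+1) - 2*real s)^2)^2 + 8*(real (2*m+1) - 2*real s)^2 + 3*real (2*m+1)*(real (2*m+1) - 2))
      \<le> 11/50 * (real (m - 1) + 2) * (real (2*m+1) * (real (2*m+1) - 1) * (real (2*m+1) - 2) * (real (2*m+1) - 3))"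
    unfolding rK rn div15[OF cf_4[of "real (2*m+1)" "m - 1", unfolded rK rn]] by (rule poly_o4[OF pp])
  then have "(\<Prod>s=1..m-1. \<bar>lam (2*m+1) 4 s\<bar>) \<le> (11/50) ^ (m - 1) * exp 2"
    by (intro gen4) (use m in auto)
  then show ?thesis by (rule fin4) (use m rK in \<open>auto intro: prod_nonneg\<close>)
qed

lemma ivl_numeral: "{1..numeral k::nat} = insert (numeral k) {1..pred_numeral k}"
  by (simp add: numeral_eq_Suc atLeastAtMostSuc_conv)

lemma exp_ge: "(25/68)^n \<le> exp (- real n)"
proof -
  have "(25/68)^n \<le> exp (-1::real) ^ n" by (rule power_mono[OF exp_m1]) auto
  also have "\<dots> = exp (- real n)" by (simp add: exp_of_nat_mult[symmetric])
  finally show ?thesis .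
qed

lemma c2_6: "(\<Prod>s=1..2. \<bar>lam 6 2 s\<bar>)^2 \<le> exp (- real (6::nat))"
proof -
  have "(\<Prod>s=1..2. \<bar>lam 6 2 s\<bar>) = (\<Prod>s=1..2. \<bar>((6 - 2*real s)^2 - 6) / (6 * (6 - 1))\<bar>)"
    by (rule prod.cong) (simp_all add: lam2)
  moreover have "(\<Prod>s=1..2. \<bar>((6 - 2*real s)^2 - 6) / (6 * (6 - 1))\<bar>)^2 \<le> (25/68::real)^6"
    by (simp only: ivl_numeral pred_numeral_simps BitM.simps atLeastAtMost_singleton numeral_One) (simp add: power_divide)
  ultimately show ?thesis using exp_ge[of 6] by simp
qed

lemma c2_8: "(\<Prod>s=1..3. \<bar>lam 8 2 s\<bar>)^2 \<le> exp (- real (8::nat))"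
proof -
  have "(\<Prod>s=1..3. \<bar>lam 8 2 s\<bar>) = (\<Prod>s=1..3. \<bar>((8 - 2*real s)^2 - 8) / (8 * (8 - 1))\<bar>)"
    by (rule prod.cong) (simp_all add: lam2)
  moreover have "(\<Prod>s=1..3. \<bar>((8 - 2*real s)^2 - 8) / (8 * (8 - 1))\<bar>)^2 \<le> (25/68::real)^8"
    by (simp only: ivl_numeral pred_numeral_simps BitM.simps atLeastAtMost_singleton numeral_One) (simp add: power_divide)
  ultimately show ?thesis using exp_ge[of 8] by simp
qed

lemma c2_10: "(\<Prod>s=1..4. \<bar>lam 10 2 s\<bar>)^2 \<le> exp (- real (10::nat))"
proof -
  have "(\<Prod>s=1..4. \<bar>lam 10 2 s\<bar>) = (\<Prod>s=1..4. \<bar>((10 - 2*real s)^2 - 10) / (10 * (10 - 1))\<bar>)"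
    by (rule prod.cong) (simp_all add: lam2)
  moreover have "(\<Prod>s=1..4. \<bar>((10 - 2*real s)^2 - 10) / (10 * (10 - 1))\<bar>)^2 \<le> (25/68::real)^10"
    by (simp only: ivl_numeral pred_numeral_simps BitM.simps atLeastAtMost_singleton numeral_One) (simp add: power_divide)
  ultimately show ?thesis using exp_ge[of 10] by simp
qed

lemma c2_12: "(\<Prod>s=1..5. \<bar>lam 12 2 s\<bar>)^2 \<le> exp (- real (12::nat))"
proof -
  have "(\<Prod>s=1..5. \<bar>lam 12 2 s\<bar>) = (\<Prod>s=1..5. \<bar>((12 - 2*real s)^2 - 12) / (12 * (12 - 1))\<bar>)"
    by (rule prod.cong) (simp_all add: lam2)
  moreover have "(\<Prod>s=1..5. \<bar>((12 - 2*real s)^2 - 12) / (12 * (12 - 1))\<bar>)^2 \<le> (25/68::real)^12"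
    by (simp only: ivl_numeral pred_numeral_simps BitM.simps atLeastAtMost_singleton numeral_One) (simp add: power_divide)
  ultimately show ?thesis using exp_ge[of 12] by simp
qed

lemma c2_14: "(\<Prod>s=1..6. \<bar>lam 14 2 s\<bar>)^2 \<le> exp (- real (14::nat))"
proof -
  have "(\<Prod>s=1..6. \<bar>lam 14 2 s\<bar>) = (\<Prod>s=1..6. \<bar>((14 - 2*real s)^2 - 14) / (14 * (14 - 1))\<bar>)"
    by (rule prod.cong) (simp_all add: lam2)
  moreover have "(\<Prod>s=1..6. \<bar>((14 - 2*real s)^2 - 14) / (14 * (14 - 1))\<bar>)^2 \<le> (25/68::real)^14"
    by (simp only: ivl_numeral pred_numeral_simps BitM.simps atLeastAtMost_singleton numeral_One) (simp add: power_divide)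
  ultimately show ?thesis using exp_ge[of 14] by simp
qed

lemma c2_16: "(\<Prod>s=1..7. \<bar>lam 16 2 s\<bar>)^2 \<le> exp (- real (16::nat))"
proof -
  have "(\<Prod>s=1..7. \<bar>lam 16 2 s\<bar>) = (\<Prod>s=1..7. \<bar>((16 - 2*real s)^2 - 16) / (16 * (16 - 1))\<bar>)"
    by (rule prod.cong) (simp_all add: lam2)
  moreover have "(\<Prod>s=1..7. \<bar>((16 - 2*real s)^2 - 16) / (16 * (16 - 1))\<bar>)^2 \<le> (25/68::real)^16"
    by (simp only: ivl_numeral pred_numeral_simps BitM.simps atLeastAtMost_singleton numeral_One) (simp add: power_divide)
  ultimately show ?thesis using exp_ge[of 16] by simp
qed

lemma c2_18: "(\<Prod>s=1..8. \<bar>lam 18 2 s\<bar>)^2 \<le> exp (- real (18::nat))"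
proof -
  have "(\<Prod>s=1..8. \<bar>lam 18 2 s\<bar>) = (\<Prod>s=1..8. \<bar>((18 - 2*real s)^2 - 18) / (18 * (18 - 1))\<bar>)"
    by (rule prod.cong) (simp_all add: lam2)
  moreover have "(\<Prod>s=1..8. \<bar>((18 - 2*real s)^2 - 18) / (18 * (18 - 1))\<bar>)^2 \<le> (25/68::real)^18"
    by (simp only: ivl_numeral pred_numeral_simps BitM.simps atLeastAtMost_singleton numeral_One) (simp add: power_divide)
  ultimately show ?thesis using exp_ge[of 18] by simp
qed

lemma c2_7: "(\<Prod>s=1..2. \<bar>lam 7 2 s\<bar>)^2 \<le> exp (- real (7::nat))"
proof -
  have "(\<Prod>s=1..2. \<bar>lam 7 2 s\<bar>) = (\<Prod>s=1..2. \<bar>((7 - 2*real s)^2 - 7) / (7 * (7 - 1))\<bar>)"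
    by (rule prod.cong) (simp_all add: lam2)
  moreover have "(\<Prod>s=1..2. \<bar>((7 - 2*real s)^2 - 7) / (7 * (7 - 1))\<bar>)^2 \<le> (25/68::real)^7"
    by (simp only: ivl_numeral pred_numeral_simps BitM.simps atLeastAtMost_singleton numeral_One) (simp add: power_divide)
  ultimately show ?thesis using exp_ge[of 7] by simp
qed

lemma c2_9: "(\<Prod>s=1..3. \<bar>lam 9 2 s\<bar>)^2 \<le> exp (- real (9::nat))"
proof -
  have "(\<Prod>s=1..3. \<bar>lam 9 2 s\<bar>) = (\<Prod>s=1..3. \<bar>((9 - 2*real s)^2 - 9) / (9 * (9 - 1))\<bar>)"
    by (rule prod.cong) (simp_all add: lam2)
  moreover have "(\<Prod>s=1..3. \<bar>((9 - 2*real s)^2 - 9) / (9 * (9 - 1))\<bar>)^2 \<le> (25/68::real)^9"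
    by (simp only: ivl_numeral pred_numeral_simps BitM.simps atLeastAtMost_singleton numeral_One) (simp add: power_divide)
  ultimately show ?thesis using exp_ge[of 9] by simp
qed

lemma c2_11: "(\<Prod>s=1..4. \<bar>lam 11 2 s\<bar>)^2 \<le> exp (- real (11::nat))"
proof -
  have "(\<Prod>s=1..4. \<bar>lam 11 2 s\<bar>) = (\<Prod>s=1..4. \<bar>((11 - 2*real s)^2 - 11) / (11 * (11 - 1))\<bar>)"
    by (rule prod.cong) (simp_all add: lam2)
  moreover have "(\<Prod>s=1..4. \<bar>((11 - 2*real s)^2 - 11) / (11 * (11 - 1))\<bar>)^2 \<le> (25/68::real)^11"
    by (simp only: ivl_numeral pred_numeral_simps BitM.simps atLeastAtMost_singleton numeral_One) (simp add: power_divide)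
  ultimately show ?thesis using exp_ge[of 11] by simp
qed

lemma c2_13: "(\<Prod>s=1..5. \<bar>lam 13 2 s\<bar>)^2 \<le> exp (- real (13::nat))"
proof -
  have "(\<Prod>s=1..5. \<bar>lam 13 2 s\<bar>) = (\<Prod>s=1..5. \<bar>((13 - 2*real s)^2 - 13) / (13 * (13 - 1))\<bar>)"
    by (rule prod.cong) (simp_all add: lam2)
  moreover have "(\<Prod>s=1..5. \<bar>((13 - 2*real s)^2 - 13) / (13 * (13 - 1))\<bar>)^2 \<le> (25/68::real)^13"
    by (simp only: ivl_numeral pred_numeral_simps BitM.simps atLeastAtMost_singleton numeral_One) (simp add: power_divide)
  ultimately show ?thesis using exp_ge[of 13] by simp
qed

lemma c2_15: "(\<Prod>s=1..6. \<bar>lam 15 2 s\<bar>)^2 \<le> exp (- real (15::nat))"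
proof -
  have "(\<Prod>s=1..6. \<bar>lam 15 2 s\<bar>) = (\<Prod>s=1..6. \<bar>((15 - 2*real s)^2 - 15) / (15 * (15 - 1))\<bar>)"
    by (rule prod.cong) (simp_all add: lam2)
  moreover have "(\<Prod>s=1..6. \<bar>((15 - 2*real s)^2 - 15) / (15 * (15 - 1))\<bar>)^2 \<le> (25/68::real)^15"
    by (simp only: ivl_numeral pred_numeral_simps BitM.simps atLeastAtMost_singleton numeral_One) (simp add: power_divide)
  ultimately show ?thesis using exp_ge[of 15] by simp
qed

lemma c2_17: "(\<Prod>s=1..7. \<bar>lam 17 2 s\<bar>)^2 \<le> exp (- real (17::nat))"
proof -
  have "(\<Prod>s=1..7. \<bar>lam 17 2 s\<bar>) = (\<Prod>s=1..7. \<bar>((17 - 2*real s)^2 - 17) / (17 * (17 - 1))\<bar>)"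
    by (rule prod.cong) (simp_all add: lam2)
  moreover have "(\<Prod>s=1..7. \<bar>((17 - 2*real s)^2 - 17) / (17 * (17 - 1))\<bar>)^2 \<le> (25/68::real)^17"
    by (simp only: ivl_numeral pred_numeral_simps BitM.simps atLeastAtMost_singleton numeral_One) (simp add: power_divide)
  ultimately show ?thesis using exp_ge[of 17] by simp
qed

lemma c2_19: "(\<Prod>s=1..8. \<bar>lam 19 2 s\<bar>)^2 \<le> exp (- real (19::nat))"
proof -
  have "(\<Prod>s=1..8. \<bar>lam 19 2 s\<bar>) = (\<Prod>s=1..8. \<bar>((19 - 2*real s)^2 - 19) / (19 * (19 - 1))\<bar>)"
    by (rule prod.cong) (simp_all add: lam2)
  moreover have "(\<Prod>s=1..8. \<bar>((19 - 2*real s)^2 - 19) / (19 * (19 - 1))\<bar>)^2 \<le> (25/68::real)^19"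
    by (simp only: ivl_numeral pred_numeral_simps BitM.simps atLeastAtMost_singleton numeral_One) (simp add: power_divide)
  ultimately show ?thesis using exp_ge[of 19] by simp
qed

lemma c2_21: "(\<Prod>s=1..9. \<bar>lam 21 2 s\<bar>)^2 \<le> exp (- real (21::nat))"
proof -
  have "(\<Prod>s=1..9. \<bar>lam 21 2 s\<bar>) = (\<Prod>s=1..9. \<bar>((21 - 2*real s)^2 - 21) / (21 * (21 - 1))\<bar>)"
    by (rule prod.cong) (simp_all add: lam2)
  moreover have "(\<Prod>s=1..9. \<bar>((21 - 2*real s)^2 - 21) / (21 * (21 - 1))\<bar>)^2 \<le> (25/68::real)^21"
    by (simp only: ivl_numeral pred_numeral_simps BitM.simps atLeastAtMost_singleton numeral_One) (simp add: power_divide)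
  ultimately show ?thesis using exp_ge[of 21] by simp
qed

lemma c2_23: "(\<Prod>s=1..10. \<bar>lam 23 2 s\<bar>)^2 \<le> exp (- real (23::nat))"
proof -
  have "(\<Prod>s=1..10. \<bar>lam 23 2 s\<bar>) = (\<Prod>s=1..10. \<bar>((23 - 2*real s)^2 - 23) / (23 * (23 - 1))\<bar>)"
    by (rule prod.cong) (simp_all add: lam2)
  moreover have "(\<Prod>s=1..10. \<bar>((23 - 2*real s)^2 - 23) / (23 * (23 - 1))\<bar>)^2 \<le> (25/68::real)^23"
    by (simp only: ivl_numeral pred_numeral_simps BitM.simps atLeastAtMost_singleton numeral_One) (simp add: power_divide)
  ultimately show ?thesis using exp_ge[of 23] by simp
qed

lemma c4_6: "(\<Prod>s=1..2. \<bar>lam 6 4 s\<bar>)^2 \<le> exp (- real (6::nat)) / 2"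
proof -
  have "(\<Prod>s=1..2. \<bar>lam 6 4 s\<bar>) = (\<Prod>s=1..2. \<bar>(((6 - 2*real s)^2)^2 - (6*6 - 8)*(6 - 2*real s)^2 + 3*6*(6 - 2)) / (6 * (6 - 1) * (6 - 2) * (6 - 3))\<bar>)"
    by (rule prod.cong) (simp_all add: lam4)
  moreover have "(\<Prod>s=1..2. \<bar>(((6 - 2*real s)^2)^2 - (6*6 - 8)*(6 - 2*real s)^2 + 3*6*(6 - 2)) / (6 * (6 - 1) * (6 - 2) * (6 - 3))\<bar>)^2 \<le> (25/68::real)^6 / 2"
    by (simp only: ivl_numeral pred_numeral_simps BitM.simps atLeastAtMost_singleton numeral_One) (simp add: power_divide)
  ultimately show ?thesis using exp_ge[of 6] by simp
qed

lemma c4_8: "(\<Prod>s=1..3. \<bar>lam 8 4 s\<bar>)^2 \<le> exp (- real (8::nat)) / 2"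
proof -
  have "(\<Prod>s=1..3. \<bar>lam 8 4 s\<bar>) = (\<Prod>s=1..3. \<bar>(((8 - 2*real s)^2)^2 - (6*8 - 8)*(8 - 2*real s)^2 + 3*8*(8 - 2)) / (8 * (8 - 1) * (8 - 2) * (8 - 3))\<bar>)"
    by (rule prod.cong) (simp_all add: lam4)
  moreover have "(\<Prod>s=1..3. \<bar>(((8 - 2*real s)^2)^2 - (6*8 - 8)*(8 - 2*real s)^2 + 3*8*(8 - 2)) / (8 * (8 - 1) * (8 - 2) * (8 - 3))\<bar>)^2 \<le> (25/68::real)^8 / 2"
    by (simp only: ivl_numeral pred_numeral_simps BitM.simps atLeastAtMost_singleton numeral_One) (simp add: power_divide)
  ultimately show ?thesis using exp_ge[of 8] by simp
qed

lemma c4_10: "(\<Prod>s=1..4. \<bar>lam 10 4 s\<bar>)^2 \<le> exp (- real (10::nat)) / 2"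
proof -
  have "(\<Prod>s=1..4. \<bar>lam 10 4 s\<bar>) = (\<Prod>s=1..4. \<bar>(((10 - 2*real s)^2)^2 - (6*10 - 8)*(10 - 2*real s)^2 + 3*10*(10 - 2)) / (10 * (10 - 1) * (10 - 2) * (10 - 3))\<bar>)"
    by (rule prod.cong) (simp_all add: lam4)
  moreover have "(\<Prod>s=1..4. \<bar>(((10 - 2*real s)^2)^2 - (6*10 - 8)*(10 - 2*real s)^2 + 3*10*(10 - 2)) / (10 * (10 - 1) * (10 - 2) * (10 - 3))\<bar>)^2 \<le> (25/68::real)^10 / 2"
    by (simp only: ivl_numeral pred_numeral_simps BitM.simps atLeastAtMost_singleton numeral_One) (simp add: power_divide)
  ultimately show ?thesis using exp_ge[of 10] by simp
qed

lemma c4_12: "(\<Prod>s=1..5. \<bar>lam 12 4 s\<bar>)^2 \<le> exp (- real (12::nat)) / 2"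
proof -
  have "(\<Prod>s=1..5. \<bar>lam 12 4 s\<bar>) = (\<Prod>s=1..5. \<bar>(((12 - 2*real s)^2)^2 - (6*12 - 8)*(12 - 2*real s)^2 + 3*12*(12 - 2)) / (12 * (12 - 1) * (12 - 2) * (12 - 3))\<bar>)"
    by (rule prod.cong) (simp_all add: lam4)
  moreover have "(\<Prod>s=1..5. \<bar>(((12 - 2*real s)^2)^2 - (6*12 - 8)*(12 - 2*real s)^2 + 3*12*(12 - 2)) / (12 * (12 - 1) * (12 - 2) * (12 - 3))\<bar>)^2 \<le> (25/68::real)^12 / 2"
    by (simp only: ivl_numeral pred_numeral_simps BitM.simps atLeastAtMost_singleton numeral_One) (simp add: power_divide)
  ultimately show ?thesis using exp_ge[of 12] by simp
qed

lemma c4_14: "(\<Prod>s=1..6. \<bar>lam 14 4 s\<bar>)^2 \<le> exp (- real (14::nat)) / 2"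
proof -
  have "(\<Prod>s=1..6. \<bar>lam 14 4 s\<bar>) = (\<Prod>s=1..6. \<bar>(((14 - 2*real s)^2)^2 - (6*14 - 8)*(14 - 2*real s)^2 + 3*14*(14 - 2)) / (14 * (14 - 1) * (14 - 2) * (14 - 3))\<bar>)"
    by (rule prod.cong) (simp_all add: lam4)
  moreover have "(\<Prod>s=1..6. \<bar>(((14 - 2*real s)^2)^2 - (6*14 - 8)*(14 - 2*real s)^2 + 3*14*(14 - 2)) / (14 * (14 - 1) * (14 - 2) * (14 - 3))\<bar>)^2 \<le> (25/68::real)^14 / 2"
    by (simp only: ivl_numeral pred_numeral_simps BitM.simps atLeastAtMost_singleton numeral_One) (simp add: power_divide)
  ultimately show ?thesis using exp_ge[of 14] by simp
qed

lemma c4_7: "(\<Prod>s=1..2. \<bar>lam 7 4 s\<bar>)^2 \<le> exp (- real (7::nat)) / 2"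
proof -
  have "(\<Prod>s=1..2. \<bar>lam 7 4 s\<bar>) = (\<Prod>s=1..2. \<bar>(((7 - 2*real s)^2)^2 - (6*7 - 8)*(7 - 2*real s)^2 + 3*7*(7 - 2)) / (7 * (7 - 1) * (7 - 2) * (7 - 3))\<bar>)"
    by (rule prod.cong) (simp_all add: lam4)
  moreover have "(\<Prod>s=1..2. \<bar>(((7 - 2*real s)^2)^2 - (6*7 - 8)*(7 - 2*real s)^2 + 3*7*(7 - 2)) / (7 * (7 - 1) * (7 - 2) * (7 - 3))\<bar>)^2 \<le> (25/68::real)^7 / 2"
    by (simp only: ivl_numeral pred_numeral_simps BitM.simps atLeastAtMost_singleton numeral_One) (simp add: power_divide)
  ultimately show ?thesis using exp_ge[of 7] by simp
qed

lemma c4_9: "(\<Prod>s=1..3. \<bar>lam 9 4 s\<bar>)^2 \<le> exp (- real (9::nat)) / 2"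
proof -
  have "(\<Prod>s=1..3. \<bar>lam 9 4 s\<bar>) = (\<Prod>s=1..3. \<bar>(((9 - 2*real s)^2)^2 - (6*9 - 8)*(9 - 2*real s)^2 + 3*9*(9 - 2)) / (9 * (9 - 1) * (9 - 2) * (9 - 3))\<bar>)"
    by (rule prod.cong) (simp_all add: lam4)
  moreover have "(\<Prod>s=1..3. \<bar>(((9 - 2*real s)^2)^2 - (6*9 - 8)*(9 - 2*real s)^2 + 3*9*(9 - 2)) / (9 * (9 - 1) * (9 - 2) * (9 - 3))\<bar>)^2 \<le> (25/68::real)^9 / 2"
    by (simp only: ivl_numeral pred_numeral_simps BitM.simps atLeastAtMost_singleton numeral_One) (simp add: power_divide)
  ultimately show ?thesis using exp_ge[of 9] by simp
qed

lemma c4_11: "(\<Prod>s=1..4. \<bar>lam 11 4 s\<bar>)^2 \<le> exp (- real (11::nat)) / 2"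
proof -
  have "(\<Prod>s=1..4. \<bar>lam 11 4 s\<bar>) = (\<Prod>s=1..4. \<bar>(((11 - 2*real s)^2)^2 - (6*11 - 8)*(11 - 2*real s)^2 + 3*11*(11 - 2)) / (11 * (11 - 1) * (11 - 2) * (11 - 3))\<bar>)"
    by (rule prod.cong) (simp_all add: lam4)
  moreover have "(\<Prod>s=1..4. \<bar>(((11 - 2*real s)^2)^2 - (6*11 - 8)*(11 - 2*real s)^2 + 3*11*(11 - 2)) / (11 * (11 - 1) * (11 - 2) * (11 - 3))\<bar>)^2 \<le> (25/68::real)^11 / 2"
    by (simp only: ivl_numeral pred_numeral_simps BitM.simps atLeastAtMost_singleton numeral_One) (simp add: power_divide)
  ultimately show ?thesis using exp_ge[of 11] by simp
qed

lemma c4_13: "(\<Prod>s=1..5. \<bar>lam 13 4 s\<bar>)^2 \<le> exp (- real (13::nat)) / 2"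
proof -
  have "(\<Prod>s=1..5. \<bar>lam 13 4 s\<bar>) = (\<Prod>s=1..5. \<bar>(((13 - 2*real s)^2)^2 - (6*13 - 8)*(13 - 2*real s)^2 + 3*13*(13 - 2)) / (13 * (13 - 1) * (13 - 2) * (13 - 3))\<bar>)"
    by (rule prod.cong) (simp_all add: lam4)
  moreover have "(\<Prod>s=1..5. \<bar>(((13 - 2*real s)^2)^2 - (6*13 - 8)*(13 - 2*real s)^2 + 3*13*(13 - 2)) / (13 * (13 - 1) * (13 - 2) * (13 - 3))\<bar>)^2 \<le> (25/68::real)^13 / 2"
    by (simp only: ivl_numeral pred_numeral_simps BitM.simps atLeastAtMost_singleton numeral_One) (simp add: power_divide)
  ultimately show ?thesis using exp_ge[of 13] by simp
qed

lemma c4_15: "(\<Prod>s=1..6. \<bar>lam 15 4 s\<bar>)^2 \<le> exp (- real (15::nat)) / 2"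
proof -
  have "(\<Prod>s=1..6. \<bar>lam 15 4 s\<bar>) = (\<Prod>s=1..6. \<bar>(((15 - 2*real s)^2)^2 - (6*15 - 8)*(15 - 2*real s)^2 + 3*15*(15 - 2)) / (15 * (15 - 1) * (15 - 2) * (15 - 3))\<bar>)"
    by (rule prod.cong) (simp_all add: lam4)
  moreover have "(\<Prod>s=1..6. \<bar>(((15 - 2*real s)^2)^2 - (6*15 - 8)*(15 - 2*real s)^2 + 3*15*(15 - 2)) / (15 * (15 - 1) * (15 - 2) * (15 - 3))\<bar>)^2 \<le> (25/68::real)^15 / 2"
    by (simp only: ivl_numeral pred_numeral_simps BitM.simps atLeastAtMost_singleton numeral_One) (simp add: power_divide)
  ultimately show ?thesis using exp_ge[of 15] by simp
qed

lemma c4_17: "(\<Prod>s=1..7. \<bar>lam 17 4 s\<bar>)^2 \<le> exp (- real (17::nat)) / 2"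
proof -
  have "(\<Prod>s=1..7. \<bar>lam 17 4 s\<bar>) = (\<Prod>s=1..7. \<bar>(((17 - 2*real s)^2)^2 - (6*17 - 8)*(17 - 2*real s)^2 + 3*17*(17 - 2)) / (17 * (17 - 1) * (17 - 2) * (17 - 3))\<bar>)"
    by (rule prod.cong) (simp_all add: lam4)
  moreover have "(\<Prod>s=1..7. \<bar>(((17 - 2*real s)^2)^2 - (6*17 - 8)*(17 - 2*real s)^2 + 3*17*(17 - 2)) / (17 * (17 - 1) * (17 - 2) * (17 - 3))\<bar>)^2 \<le> (25/68::real)^17 / 2"
    by (simp only: ivl_numeral pred_numeral_simps BitM.simps atLeastAtMost_singleton numeral_One) (simp add: power_divide)
  ultimately show ?thesis using exp_ge[of 17] by simp
qed



lemma lam_pm1: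
  assumes n: "n \<ge> 4" and sq: "(real n - 2*real s)^2 = 1" and b: "b = 2 \<or> b = 4"
  shows "\<bar>lam n b s\<bar> \<le> 1"
  using b
proof
  assume "b = 2"
  have "lam n 2 s = (1 - real n) / (real n * (real n - 1))" using n by (simp add: lam2 sq)
  also have "\<dots> = - 1 / real n" using n by (simp add: field_simps)
  finally show ?thesis using \<open>b = 2\<close> n by simp
next
  assume "b = 4"
  define A where "A = (real n - 1) * (real n - 3)"
  have A0: "A > 0" unfolding A_def using n by simp
  have "lam n 4 s = (1 - (6*real n - 8) + 3*real n*(real n - 2)) / (real n * (real n - 1) * (real n - 2) * (real n - 3))"
    using n by (simp add: lam4 sq)
  also have "\<dots> = (3 * A) / ((real n * (real n - 2)) * A)"
    unfolding A_def by (simp add: algebra_simps)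
  finally have e: "lam n 4 s = (3 * A) / ((real n * (real n - 2)) * A)" .
  have "real n * (real n - 2) \<ge> 4 * 2" using n by (intro mult_mono) auto
  then have "3 * A \<le> (real n * (real n - 2)) * A" using A0 by (intro mult_right_mono) auto
  then have "(3 * A) / ((real n * (real n - 2)) * A) \<le> 1"
    using A0 \<open>real n * (real n - 2) \<ge> 4 * 2\<close> by (simp add: divide_le_eq)
  moreover have "0 \<le> (3 * A) / ((real n * (real n - 2)) * A)"
    using A0 \<open>real n * (real n - 2) \<ge> 4 * 2\<close> by simp
  ultimately show ?thesis using \<open>b = 4\<close> e by simp
qed

lemma even_b:
  assumes p: "p \<ge> 3" and b: "b = 2 \<or> b = 4"
    and T: "(\<Prod>s=1..p-1. \<bar>lam (2*p) b s\<bar>)^2 \<le> t"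
  shows "\<bar>lamv (2*p) b (nvec_del (2*p) {2*p div 2})\<bar> \<le> t"
proof -
  have "\<bar>lamv (2*p) b (nvec_del (2*p) {p})\<bar> = (\<Prod>s\<in>{1..p-1}. \<bar>lam (2*p) b s\<bar>)^2"
  proof (rule lamv_sq)
    show "{1..2*p} - {p} = {1..p-1} \<union> {2*p-(p-1)..2*p-1} \<union> {2*p}" using p by auto
  qed (use p b in auto)
  then show ?thesis using T by simp
qed

lemma odd_b:
  assumes m: "m \<ge> 3" and b: "b = 2 \<or> b = 4"
    and T: "(\<Prod>s=1..m-1. \<bar>lam (2*m+1) b s\<bar>)^2 \<le> t"
  shows "\<bar>lamv (2*m+1) b (nvec_del (2*m+1) {m, m+1})\<bar> \<le> t \<and>
         \<bar>lamv (2*m+1) b (nvec_del (2*m+1) {m})\<bar> \<le> t \<and>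
         \<bar>lamv (2*m+1) b (nvec_del (2*m+1) {m+1})\<bar> \<le> t \<and>
         \<bar>lambar (2*m+1) b\<bar> \<le> t"
proof -
  let ?n = "2*m+1"
  let ?S = "{1..?n} - {m, m+1}"
  have A: "\<bar>lamv ?n b (nvec_del ?n {m, m+1})\<bar> = (\<Prod>s\<in>{1..m-1}. \<bar>lam ?n b s\<bar>)^2"
  proof (rule lamv_sq)
    show "{1..?n} - {m, m+1} = {1..m-1} \<union> {?n-(m-1)..?n-1} \<union> {?n}" using m by auto
  qed (use m b in auto)
  have P: "(\<Prod>s\<in>?S. lam ?n b s) = lamv ?n b (nvec_del ?n {m, m+1})" by (simp add: lamv_set)
  have t1: "\<bar>lamv ?n b (nvec_del ?n {m, m+1})\<bar> \<le> t" using A T by simp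
  have l1: "\<bar>lam ?n b m\<bar> \<le> 1" by (rule lam_pm1) (use m b in \<open>auto simp: power2_eq_square\<close>)
  have l2: "\<bar>lam ?n b (m+1)\<bar> \<le> 1" by (rule lam_pm1) (use m b in \<open>auto simp: power2_eq_square algebra_simps\<close>)
  have t0: "0 \<le> t" using T by (meson order.trans zero_le_power2)
  have se1: "{1..?n} - {m} = insert (m+1) ?S" using m by auto
  have "lamv ?n b (nvec_del ?n {m}) = (\<Prod>s\<in>insert (m+1) ?S. lam ?n b s)"
    unfolding lamv_set se1 ..
  also have "\<dots> = lam ?n b (m+1) * (\<Prod>s\<in>?S. lam ?n b s)" by (rule prod.insert) auto
  finally have "\<bar>lamv ?n b (nvec_del ?n {m})\<bar> = \<bar>lam ?n b (m+1)\<bar> * \<bar>lamv ?n b (nvec_del ?n {m, m+1})\<bar>"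
    unfolding P by (simp add: abs_mult)
  also have "\<dots> \<le> 1 * t" by (rule mult_mono) (use l2 t1 in auto)
  finally have t2: "\<bar>lamv ?n b (nvec_del ?n {m})\<bar> \<le> t" by simp
  have se2: "{1..?n} - {m+1} = insert m ?S" using m by auto
  have "lamv ?n b (nvec_del ?n {m+1}) = (\<Prod>s\<in>insert m ?S. lam ?n b s)"
    unfolding lamv_set se2 ..
  also have "\<dots> = lam ?n b m * (\<Prod>s\<in>?S. lam ?n b s)" by (rule prod.insert) auto
  finally have "\<bar>lamv ?n b (nvec_del ?n {m+1})\<bar> = \<bar>lam ?n b m\<bar> * \<bar>lamv ?n b (nvec_del ?n {m, m+1})\<bar>"
    unfolding P by (simp add: abs_mult)
  also have "\<dots> \<le> 1 * t" by (rule mult_mono) (use l1 t1 in auto)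
  finally have t3: "\<bar>lamv ?n b (nvec_del ?n {m+1})\<bar> \<le> t" by simp
  have "lambar ?n b = (\<Prod>s\<in>?S. lam ?n b s) * ((lam ?n b m + lam ?n b (m+1)) / 2)"
    unfolding lambar_def Let_def by simp
  then have "\<bar>lambar ?n b\<bar> = \<bar>lamv ?n b (nvec_del ?n {m, m+1})\<bar> * \<bar>(lam ?n b m + lam ?n b (m+1)) / 2\<bar>"
    unfolding P by (simp only: abs_mult)
  also have "\<dots> \<le> t * 1"
    by (rule mult_mono) (use l1 l2 t1 t0 in \<open>auto simp: abs_le_iff\<close>)
  finally have t4: "\<bar>lambar ?n b\<bar> \<le> t" by simp
  show ?thesis using t1 t2 t3 t4 by simp
qed

lemma all_e2: assumes "p \<ge> 3" shows "(\<Prod>s=1..p-1. \<bar>lam (2*p) 2 s\<bar>)^2 \<le> exp (- real (2*p))"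
proof (cases "p \<ge> 10")
  case True then show ?thesis by (rule core_e2)
next
  case False
  then have "p = 3 \<or> p = 4 \<or> p = 5 \<or> p = 6 \<or> p = 7 \<or> p = 8 \<or> p = 9" using assms by auto
  then show ?thesis using c2_6 c2_8 c2_10 c2_12 c2_14 c2_16 c2_18 by (elim disjE) simp_all
qed

lemma all_o2: assumes "m \<ge> 3" shows "(\<Prod>s=1..m-1. \<bar>lam (2*m+1) 2 s\<bar>)^2 \<le> exp (- real (2*m+1))"
proof (cases "m \<ge> 12")
  case True then show ?thesis by (rule core_o2)
next
  case False
  then have "m = 3 \<or> m = 4 \<or> m = 5 \<or> m = 6 \<or> m = 7 \<or> m = 8 \<or> m = 9 \<or> m = 10 \<or> m = 11" using assms by auto
  then show ?thesis using c2_7 c2_9 c2_11 c2_13 c2_15 c2_17 c2_19 c2_21 c2_23 by (elim disjE) simp_all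
qed

lemma all_e4: assumes "p \<ge> 3" shows "(\<Prod>s=1..p-1. \<bar>lam (2*p) 4 s\<bar>)^2 \<le> exp (- real (2*p)) / 2"
proof (cases "p \<ge> 8")
  case True then show ?thesis by (rule core_e4)
next
  case False
  then have "p = 3 \<or> p = 4 \<or> p = 5 \<or> p = 6 \<or> p = 7" using assms by auto
  then show ?thesis using c4_6 c4_8 c4_10 c4_12 c4_14 by (elim disjE) simp_all
qed

lemma all_o4: assumes "m \<ge> 3" shows "(\<Prod>s=1..m-1. \<bar>lam (2*m+1) 4 s\<bar>)^2 \<le> exp (- real (2*m+1)) / 2"
proof (cases "m \<ge> 9")
  case True then show ?thesis by (rule core_o4)
next
  case False
  then have "m = 3 \<or> m = 4 \<or> m = 5 \<or> m = 6 \<or> m = 7 \<or> m = 8" using assms by auto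
  then show ?thesis using c4_7 c4_9 c4_11 c4_13 c4_15 c4_17 by (elim disjE) simp_all
qed

theorem lemma4p5:
  shows "(\<forall>n::nat. even n \<and> n \<ge> 6 \<longrightarrow>
            \<bar>lamv n 2 (nvec_del n {n div 2})\<bar> \<le> exp (- real n) \<and>
            \<bar>lamv n 4 (nvec_del n {n div 2})\<bar> \<le> exp (- real n) / 2)
       \<and> (\<forall>m::nat. 2*m+1 \<ge> 7 \<longrightarrow>
            (\<forall>ss \<in> {nvec_del (2*m+1) {m}, nvec_del (2*m+1) {m+1}, nvec_del (2*m+1) {m, m+1}}.
               \<bar>lamv (2*m+1) 2 ss\<bar> \<le> exp (- real (2*m+1)) \<and>
               \<bar>lamv (2*m+1) 4 ss\<bar> \<le> exp (- real (2*m+1)) / 2))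
       \<and> (\<forall>m::nat. 2*m+1 \<ge> 7 \<longrightarrow>
               \<bar>lambar (2*m+1) 2\<bar> \<le> exp (- real (2*m+1)) \<and>
               \<bar>lambar (2*m+1) 4\<bar> \<le> exp (- real (2*m+1)) / 2)"
proof (intro conjI allI impI)
  fix n :: nat assume h: "even n \<and> n \<ge> 6"
  then obtain p where n: "n = 2*p" by (auto elim: evenE)
  have p: "p \<ge> 3" using h n by simp
  show "\<bar>lamv n 2 (nvec_del n {n div 2})\<bar> \<le> exp (- real n)"
    unfolding n by (rule even_b[OF p _ all_e2[OF p]]) simp
  show "\<bar>lamv n 4 (nvec_del n {n div 2})\<bar> \<le> exp (- real n) / 2"
    unfolding n by (rule even_b[OF p _ all_e4[OF p]]) simp
next
  fix m :: nat assume "2*m+1 \<ge> 7"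
  then have m: "m \<ge> 3" by simp
  have A: "\<bar>lamv (2*m+1) 2 (nvec_del (2*m+1) {m, m+1})\<bar> \<le> exp (- real (2*m+1)) \<and>
         \<bar>lamv (2*m+1) 2 (nvec_del (2*m+1) {m})\<bar> \<le> exp (- real (2*m+1)) \<and>
         \<bar>lamv (2*m+1) 2 (nvec_del (2*m+1) {m+1})\<bar> \<le> exp (- real (2*m+1)) \<and>
         \<bar>lambar (2*m+1) 2\<bar> \<le> exp (- real (2*m+1))"
    by (rule odd_b[OF m _ all_o2[OF m]]) simp
  have B: "\<bar>lamv (2*m+1) 4 (nvec_del (2*m+1) {m, m+1})\<bar> \<le> exp (- real (2*m+1)) / 2 \<and>
         \<bar>lamv (2*m+1) 4 (nvec_del (2*m+1) {m})\<bar> \<le> exp (- real (2*m+1)) / 2 \<and>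
         \<bar>lamv (2*m+1) 4 (nvec_del (2*m+1) {m+1})\<bar> \<le> exp (- real (2*m+1)) / 2 \<and>
         \<bar>lambar (2*m+1) 4\<bar> \<le> exp (- real (2*m+1)) / 2"
    by (rule odd_b[OF m _ all_o4[OF m]]) simp
  show "\<forall>ss \<in> {nvec_del (2*m+1) {m}, nvec_del (2*m+1) {m+1}, nvec_del (2*m+1) {m, m+1}}.
               \<bar>lamv (2*m+1) 2 ss\<bar> \<le> exp (- real (2*m+1)) \<and>
               \<bar>lamv (2*m+1) 4 ss\<bar> \<le> exp (- real (2*m+1)) / 2"
    using A B by auto
  show "\<bar>lambar (2*m+1) 2\<bar> \<le> exp (- real (2*m+1))" using A by simp
  show "\<bar>lambar (2*m+1) 4\<bar> \<le> exp (- real (2*m+1)) / 2" using B by simp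
qed

end
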